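(* Let $S=s_1,\ldots,s_n$ be a sequence of positive real numbers, $\gamma>0$, $k$ a positive integer and $\epsilon>0$, and let $\Omega=\max_i s_i$ and $\omega=\min_i s_i$. The computational complexity of $\textit{ApproxExp}(S,\gamma,k,\epsilon)$ is $O(\epsilon^{-2}nk^3\log^2(\Omega/\omega))$.
   Context: A level sequence is $L=\ell_1,\ldots,\ell_n$ of integers with $0\le\ell_i\le k$; set $\ell_0=0$. The penalty is $\mathrm{pen}(x,y)=\max(y-x,0)\,\gamma\log n$; $p_{\exp}(s;\lambda)=\lambda e^{-\lambda s}$; $\mathrm{score}_{\exp}(L,S;\alpha,\beta,\gamma)=\sum_{i=1}^n\big[-\log p_{\exp}(s_i;\beta\alpha^{\ell_i})+\mathrm{pen}(\ell_{i-1},\ell_i)\big]$. $\textit{Viterbi}(S,\alpha,\beta,\gamma,k,p_{\exp})$ is a dynamic program returning a level sequence minimizing this score for fixed $\alpha,\beta$ in $O(nk)$ time. Algorithm $\textit{ExpAlpha}(S,\alpha,\gamma,k,\epsilon)$: let $\mu=\frac1n\sum_i s_i$ and $\beta=1/\mu$; while $\beta\ge1/(\alpha^k\mu)$: run $\textit{Viterbi}(S,\alpha,\beta,\gamma,k,p_{\exp})$ and set $\beta\leftarrow\beta/(1+\epsilon)$; return the best tested $(L,\beta)$. Algorithm $\textit{ApproxExp}(S,\gamma,k,\epsilon)$: let $\alpha=(\max_i s_i)/(\min_i s_i)$ and $c=(1+\epsilon)^{1/(2k)}$; while $\alpha\ge1$: run $\textit{ExpAlpha}(S,\alpha,\gamma,k,\epsilon/2)$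 and set $\alpha\leftarrow\alpha/c$. Return the best observed solution. *)

theory Defs
  imports Complex_Main
begin

text \<open>Cost model for the algorithms ApproxExp / ExpAlpha / Viterbi.
  One call of Viterbi with k levels (levels 0..k) costs n*(k+1) unit steps (O(nk)).\<close>

definition viterbi_cost :: "nat \<Rightarrow> nat \<Rightarrow> real" where
  "viterbi_cost n k = real n * (real k + 1)"

text \<open>Number of iterations of the loop
  "x := x0; while x \<ge> t do (body; x := x / r)": the body is executed
  exactly for the values x0 / r^j that are \<ge> t (these form an initial segment
  of the indices j, since r > 1).\<close>

definition loop_iters :: "real \<Rightarrow> real \<Rightarrow> real \<Rightarrow> nat" where
  "loop_iters x0 r t = card {j::nat. t \<le> x0 / r ^ j}"

definition mean :: "real list \<Rightarrow> real" where
  "mean S = sum_list S / real (length S)"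

text \<open>ExpAlpha(S, alpha, gamma, k, eps): computing mu costs n; each loop
  iteration runs Viterbi once plus O(1) bookkeeping (update beta, compare with best).\<close>

definition expalpha_cost :: "real list \<Rightarrow> real \<Rightarrow> nat \<Rightarrow> real \<Rightarrow> real" where
  "expalpha_cost S \<alpha> k \<epsilon> =
     real (length S) +
     real (loop_iters (1 / mean S) (1 + \<epsilon>) (1 / (\<alpha> ^ k * mean S)))
       * (viterbi_cost (length S) k + 1)"

text \<open>ApproxExp(S, gamma, k, eps): computing max and min costs 2n; the
  outer loop starts at alpha0 = max/min and divides by c = (1+eps)^(1/(2k))
  while alpha \<ge> 1; each iteration runs ExpAlpha with eps/2 plus O(1) bookkeeping.\<close>

definition approxexp_cost :: "real list \<Rightarrow> nat \<Rightarrow> real \<Rightarrow> real" where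
  "approxexp_cost S k \<epsilon> =
     (let \<alpha>0 = Max (set S) / Min (set S);
          c = (1 + \<epsilon>) powr (1 / (2 * real k))
      in 2 * real (length S) +
         (\<Sum>j\<in>{j::nat. 1 \<le> \<alpha>0 / c ^ j}. expalpha_cost S (\<alpha>0 / c ^ j) k (\<epsilon> / 2) + 1))"

end

theory Submission
  imports Defs
begin

lemma card_pow_bound:
  fixes r X B :: real
  assumes r: "1 < r" and X: "0 < X" and B: "ln X \<le> B * ln r" "0 \<le> B"
  shows "finite {j::nat. r ^ j \<le> X} \<and> real (card {j::nat. r ^ j \<le> X}) \<le> B + 1"
proof -
  have sub: "{j::nat. r ^ j \<le> X} \<subseteq> {..nat \<lfloor>B\<rfloor>}"
  proof
    fix j assume "j \<in> {j::nat. r ^ j \<le> X}"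
    then have "r ^ j \<le> X" by simp
    then have "ln (r ^ j) \<le> ln X" using r X by simp
    then have "real j * ln r \<le> ln X" using r X B by (simp add: ln_realpow)
    then have "real j * ln r \<le> B * ln r" using B by linarith
    then have "real j \<le> B" using r by simp
    then show "j \<in> {..nat \<lfloor>B\<rfloor>}" by (simp add: le_nat_floor)
  qed
  have "card {j::nat. r ^ j \<le> X} \<le> card {..nat \<lfloor>B\<rfloor>}" by (rule card_mono[OF _ sub]) simp
  then have "real (card {j::nat. r ^ j \<le> X}) \<le> real (nat \<lfloor>B\<rfloor>) + 1" by simp
  also have "\<dots> \<le> B + 1" using B by linarith
  finally show ?thesis using finite_subset[OF sub] by simp
qed

lemma ln_lb:
  fixes e :: real assumes "0 < e" "e \<le> 1"
  shows "e / 4 \<le> ln (1 + e / 2)" "e / 4 \<le> ln (1 + e)"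
proof -
  have "e/2 - (e/2)^2 \<le> ln (1 + e/2)" using assms by (intro ln_one_plus_pos_lower_bound) auto
  moreover have "e/4 \<le> e/2 - (e/2)^2" using assms by (simp add: power2_eq_square)
  ultimately show 1: "e / 4 \<le> ln (1 + e / 2)" by linarith
  have "ln (1 + e/2) \<le> ln (1 + e)" using assms by simp
  with 1 show "e / 4 \<le> ln (1 + e)" by linarith
qed


theorem proposition9:
  "\<exists>C>0. \<forall>(S::real list) (k::nat) (\<epsilon>::real).
      S \<noteq> [] \<and> (\<forall>s\<in>set S. 0 < s) \<and> 1 \<le> k \<and> 0 < \<epsilon> \<and> \<epsilon> \<le> 1 \<longrightarrow>
      approxexp_cost S k \<epsilon>
        \<le> C * (real (length S) * real k ^ 3 / \<epsilon> ^ 2)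
             * (max 1 (ln (Max (set S) / Min (set S)))) ^ 2"
proof (intro exI[of _ 200] conjI allI impI)
  fix S :: "real list" and k :: nat and e :: real
  assume H: "S \<noteq> [] \<and> (\<forall>s\<in>set S. 0 < s) \<and> 1 \<le> k \<and> 0 < e \<and> e \<le> 1"
  then have Sne: "S \<noteq> []" and pos: "\<forall>s\<in>set S. 0 < s" and k1: "1 \<le> k" and e0: "0 < e" and e1: "e \<le> 1"
    by auto
  define n where "n = real (length S)"
  define K where "K = real k"
  define a0 where "a0 = Max (set S) / Min (set S)"
  define L where "L = ln a0"
  define M where "M = max 1 L"
  define c where "c = (1 + e) powr (1 / (2 * real k))"
  define P where "P = K * M / e"
  have n1: "1 \<le> n" using Sne by (simp add: n_def Suc_le_eq)
  have K1: "1 \<le> K" using k1 by (simp add: K_def)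
  have fin: "finite (set S)" "set S \<noteq> {}" using Sne by auto
  have minpos: "0 < Min (set S)" using fin pos by simp
  obtain s0 where s0: "s0 \<in> set S" using Sne by (meson list.set_sel(1))
  have minmax: "Min (set S) \<le> Max (set S)" using fin s0 by (meson Max_ge Min_le order.trans)
  have a01: "1 \<le> a0" unfolding a0_def using minpos minmax by simp
  have L0: "0 \<le> L" unfolding L_def using a01 by simp
  have M1: "1 \<le> M" and LM: "L \<le> M" unfolding M_def by auto
  have KM1: "1 * 1 \<le> K * M" using K1 M1 by (intro mult_mono) auto
  have P1: "1 \<le> P" unfolding P_def using KM1 e0 e1 by (simp add: field_simps)
  have Ppos: "0 < P" using P1 by simp
  have mupos: "0 < mean S"
  proof -
    have "s0 \<le> sum_list S" using s0 pos by (intro member_le_sum_list) auto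
    then have "0 < sum_list S" using s0 pos by force
    then show ?thesis unfolding mean_def using Sne by simp
  qed
  have lnc: "ln c = ln (1 + e) / (2 * K)" unfolding c_def K_def using e0 by (simp add: ln_powr)
  have lnc_lb: "e / (8 * K) \<le> ln c"
  proof -
    have "e / 4 \<le> ln (1 + e)" using ln_lb e0 e1 by blast
    then have "(e/4) / (2 * K) \<le> ln (1 + e) / (2 * K)" using K1 by (intro divide_right_mono) auto
    then show ?thesis using lnc by simp
  qed
  have lnc_pos: "0 < ln c" using lnc_lb e0 K1 by (smt (verit) divide_pos_pos)
  have c1: "1 < c" using lnc_pos c_def e0 by (smt (verit) ln_le_zero_iff powr_gt_zero)
  define A where "A = {j::nat. 1 \<le> a0 / c ^ j}"
  have A_eq: "A = {j::nat. c ^ j \<le> a0}" unfolding A_def using c1 by (auto simp: field_simps)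
  have Abound: "finite A \<and> real (card A) \<le> 8 * P + 1"
    unfolding A_eq
  proof (rule card_pow_bound[OF c1])
    show "0 < a0" using a01 by simp
    show "0 \<le> 8 * P" using Ppos by simp
    have "8 * P * (e / (8 * K)) = M" unfolding P_def using e0 K1 by (simp add: field_simps)
    then have "M \<le> 8 * P * ln c" using lnc_lb Ppos by (metis mult_left_mono less_eq_real_def zero_less_mult_iff zero_less_numeral)
    then show "ln a0 \<le> 8 * P * ln c" using LM L_def by simp
  qed
  have cardA: "real (card A) \<le> 9 * P" using Abound P1 by simp
  have inner: "expalpha_cost S (a0 / c ^ j) k (e / 2) + 1 \<le> 17 * n * K * P" if j: "j \<in> A" for j
  proof -
    define \<alpha> where "\<alpha> = a0 / c ^ j"
    have al1: "1 \<le> \<alpha>" using j unfolding A_def \<alpha>_def by simp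
    have ala0: "\<alpha> \<le> a0" unfolding \<alpha>_def using c1 a01
      by (simp add: divide_le_eq)
    define r where "r = 1 + e / 2"
    have r1: "1 < r" using e0 r_def by simp
    have set_eq: "{i::nat. 1 / (\<alpha> ^ k * mean S) \<le> 1 / mean S / (1 + e / 2) ^ i} = {i. r ^ i \<le> \<alpha> ^ k}"
      using mupos al1 r1 unfolding r_def by (auto simp: field_simps)
    have ib: "finite {i::nat. r ^ i \<le> \<alpha> ^ k} \<and> real (card {i::nat. r ^ i \<le> \<alpha> ^ k}) \<le> 4 * P + 1"
    proof (rule card_pow_bound[OF r1])
      show "0 < \<alpha> ^ k" using al1 by simp
      show "0 \<le> 4 * P" using Ppos by simp
      have "ln (\<alpha> ^ k) = K * ln \<alpha>" using al1 by (simp add: ln_realpow K_def)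
      also have "\<dots> \<le> K * M" using K1 al1 ala0 LM unfolding L_def
        by (intro mult_left_mono) (auto intro: order.trans[of _ "ln a0"])
      also have "\<dots> = 4 * P * (e / 4)" unfolding P_def using e0 by simp
      also have "\<dots> \<le> 4 * P * ln r" using ln_lb(1)[OF e0 e1] Ppos unfolding r_def by simp
      finally show "ln (\<alpha> ^ k) \<le> 4 * P * ln r" .
    qed
    have li: "real (loop_iters (1 / mean S) (1 + e / 2) (1 / (\<alpha> ^ k * mean S))) \<le> 5 * P"
      unfolding loop_iters_def set_eq using ib P1 by simp
    have vc: "viterbi_cost (length S) k + 1 \<le> 3 * n * K"
    proof -
      have "n * 1 \<le> n * K" using n1 K1 by (intro mult_left_mono) auto
      then show ?thesis
        using n1 unfolding viterbi_cost_def n_def K_def by (simp add: algebra_simps)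
    qed
    have vc0: "0 \<le> viterbi_cost (length S) k + 1" unfolding viterbi_cost_def by simp
    have mm: "real (loop_iters (1 / mean S) (1 + e / 2) (1 / (\<alpha> ^ k * mean S))) * (viterbi_cost (length S) k + 1)
       \<le> 5 * P * (3 * n * K)"
      using Ppos vc0 by (intro mult_mono[OF li vc]) auto
    have "expalpha_cost S \<alpha> k (e / 2) \<le> n + 5 * P * (3 * n * K)"
      unfolding expalpha_cost_def using mm n_def by linarith
    moreover have KP1: "1 * 1 \<le> K * P" using K1 P1 by (intro mult_mono) auto
    have nKP: "n * 1 \<le> n * (K * P)" using n1 KP1 by (intro mult_left_mono) auto
    then have "n \<le> n * K * P" by (simp add: mult.assoc)
    moreover have "1 \<le> n * (K * P)" using nKP n1 by linarith
    then have "1 \<le> n * K * P" by (simp add: mult.assoc)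
    ultimately show ?thesis unfolding \<alpha>_def by (simp add: algebra_simps)
  qed
  have sumb: "(\<Sum>j\<in>A. expalpha_cost S (a0 / c ^ j) k (e / 2) + 1) \<le> real (card A) * (17 * n * K * P)"
    using inner by (intro sum_bounded_above) auto
  also have "\<dots> \<le> 9 * P * (17 * n * K * P)"
    using cardA n1 K1 P1 by (intro mult_right_mono) auto
  finally have sumb2: "(\<Sum>j\<in>A. expalpha_cost S (a0 / c ^ j) k (e / 2) + 1) \<le> 153 * (n * K * P^2)"
    by (simp add: power2_eq_square algebra_simps)
  have P21: "1 \<le> P^2" using P1 by (simp add: one_le_power)
  have KP21: "1 * 1 \<le> K * P^2" using K1 P21 by (intro mult_mono) auto
  have "n * 1 \<le> n * (K * P^2)" using n1 KP21 by (intro mult_left_mono) auto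
  then have nb: "n \<le> n * K * P^2" by (simp add: mult.assoc)
  have cost: "approxexp_cost S k e = 2 * n + (\<Sum>j\<in>A. expalpha_cost S (a0 / c ^ j) k (e / 2) + 1)"
    unfolding approxexp_cost_def A_def a0_def c_def n_def Let_def by simp
  have "approxexp_cost S k e \<le> 155 * (n * K * P^2)" using cost sumb2 nb by simp
  also have "n * K * P^2 = n * K ^ 3 / e ^ 2 * M ^ 2" unfolding P_def using e0
    by (simp add: power2_eq_square power3_eq_cube field_simps)
  finally have F1: "approxexp_cost S k e \<le> 155 * (n * K ^ 3 / e ^ 2 * M ^ 2)" .
  have F2: "0 \<le> n * K ^ 3 / e ^ 2 * M ^ 2" using n1 K1 e0 by simp
  have "approxexp_cost S k e \<le> 200 * (n * K ^ 3 / e ^ 2 * M ^ 2)"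
  proof -
    have "155 * (n * K ^ 3 / e ^ 2 * M ^ 2) \<le> 200 * (n * K ^ 3 / e ^ 2 * M ^ 2)"
      using F2 by (intro mult_right_mono) auto
    then show ?thesis using F1 by (rule order.trans[rotated])
  qed
  then show "approxexp_cost S k e \<le> 200 * (real (length S) * real k ^ 3 / e ^ 2)
             * (max 1 (ln (Max (set S) / Min (set S)))) ^ 2"
    unfolding n_def[symmetric] K_def[symmetric] M_def[symmetric] L_def[symmetric] a0_def[symmetric]
    by (simp only: mult.assoc)
qed (simp)

end
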